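(* Let $|q|>1$, $n\geq 0$, and consider the function \[ \Phi(z;t_r;u_0,u_1)=\prod_{k=0}^{n-1} \frac{1}{(pq^{n-k}z/u_0,\,q^{n-k} /(u_0z);p)}\cdot \frac{1}{(pu_0z/q,\, u_0/(qz),\,pu_1z/q^n,\,u_1/(q^nz) ;p,q^{-1}) \prod_{r=0}^3 (pt_rz/q,\,t_r/(qz) ;p,q^{-1})}. \] Substitute $z\to zp^{\zeta}$, $t_r\to t_rp^{\alpha_r}$ $(0\le r\le 3)$, $u_0\to u_0p^{\alpha_4}$, $u_1\to u_1p^{\alpha_5}$, with $(\alpha;\zeta)=(\alpha_0,\dots,\alpha_5;\zeta)$ in the polytope $P$. Then the leading coefficient (limit as $p\to0$ after rescaling by $p^{-val}$) of the resulting function depends on $z$ only if $\alpha_r+\tfrac12=|\zeta+\tfrac12|$ for some $0\leq r\leq 5$, or $\alpha_4 + |\zeta+\tfrac12| \geq \tfrac12$.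
   Context: For $|a|<1$ write $(x;a)=\prod_{j\ge0}(1-xa^j)$ and $(x;p,a)=\prod_{i,j\ge0}(1-xp^ia^j)$, written multiplicatively (a comma-separated list of arguments denotes the product). Here $0<|p|<1$, and $t_0,\dots,t_3,u_0,u_1,z$ are independent of $p$. Valuation and leading coefficient refer to the expansion in (real) powers of $p$: if $F\sim c\,p^{v}$ with $c\neq 0$ independent of $p$ as $p\to0$, then $val(F)=v$ and $lc(F)=c$. $P$ is the set of $(\alpha_0,\dots,\alpha_5;\zeta)\in\mathbb{R}^7$ satisfying $\sum_{i=0}^5\alpha_i=1$, $|\tfrac12+\zeta|\le\tfrac12$, $|\tfrac12+\zeta|-\tfrac12\le\alpha_i$ for all $i$, $\alpha_i\le 1+\alpha_j$ and $\alpha_i+\alpha_j\le 1$ for all distinct $i,j$, and $\alpha_i+\alpha_j+\alpha_k+|\tfrac12+\zeta|\le\tfrac32$ for all distinct $i,j,k$ (indices in $\{0,\dots,5\}$). *)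

theory Defs
  imports "HOL-Analysis.Analysis"
begin

definition qpoch1 :: "complex \<Rightarrow> complex \<Rightarrow> complex" where
  "qpoch1 x a = (\<Prod>j. 1 - x * a ^ j)"

definition qpoch2 :: "complex \<Rightarrow> complex \<Rightarrow> complex \<Rightarrow> complex" where
  "qpoch2 x p a = (\<Prod>i. qpoch1 (x * p ^ i) a)"

definition Phi :: "nat \<Rightarrow> complex \<Rightarrow> complex \<Rightarrow> complex \<Rightarrow> (nat \<Rightarrow> complex)
                    \<Rightarrow> complex \<Rightarrow> complex \<Rightarrow> complex" where
  "Phi n q p z t u0 u1 =
     1 / ( (\<Prod>k<n. qpoch1 (p * q ^ (n - k) * z / u0) p * qpoch1 (q ^ (n - k) / (u0 * z)) p)
         * qpoch2 (p * u0 * z / q) p (1 / q) * qpoch2 (u0 / (q * z)) p (1 / q)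
         * qpoch2 (p * u1 * z / q ^ n) p (1 / q) * qpoch2 (u1 / (q ^ n * z)) p (1 / q)
         * (\<Prod>r<4. qpoch2 (p * t r * z / q) p (1 / q) * qpoch2 (t r / (q * z)) p (1 / q)))"

definition inP :: "(nat \<Rightarrow> real) \<Rightarrow> real \<Rightarrow> bool" where
  "inP \<alpha> \<zeta> \<longleftrightarrow>
     (\<Sum>i<6. \<alpha> i) = 1 \<and> \<bar>1/2 + \<zeta>\<bar> \<le> 1/2 \<and>
     (\<forall>i<6. \<bar>1/2 + \<zeta>\<bar> - 1/2 \<le> \<alpha> i) \<and>
     (\<forall>i<6. \<forall>j<6. i \<noteq> j \<longrightarrow> \<alpha> i \<le> 1 + \<alpha> j \<and> \<alpha> i + \<alpha> j \<le> 1) \<and>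
     (\<forall>i<6. \<forall>j<6. \<forall>k<6. i \<noteq> j \<and> i \<noteq> k \<and> j \<noteq> k \<longrightarrow>
         \<alpha> i + \<alpha> j + \<alpha> k + \<bar>1/2 + \<zeta>\<bar> \<le> 3/2)"

definition Fsub :: "nat \<Rightarrow> complex \<Rightarrow> (nat \<Rightarrow> complex) \<Rightarrow> complex \<Rightarrow> complex
                    \<Rightarrow> (nat \<Rightarrow> real) \<Rightarrow> real \<Rightarrow> complex \<Rightarrow> real \<Rightarrow> complex" where
  "Fsub n q t u0 u1 \<alpha> \<zeta> z p =
     Phi n q (complex_of_real p) (z * complex_of_real (p powr \<zeta>))
       (\<lambda>r. t r * complex_of_real (p powr \<alpha> r))
       (u0 * complex_of_real (p powr \<alpha> 4)) (u1 * complex_of_real (p powr \<alpha> 5))"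

definition has_val_lc :: "(real \<Rightarrow> complex) \<Rightarrow> real \<Rightarrow> complex \<Rightarrow> bool" where
  "has_val_lc F v c \<longleftrightarrow> c \<noteq> 0 \<and>
     ((\<lambda>p. F p / complex_of_real (p powr v)) \<longlongrightarrow> c) (at_right 0)"

end

theory Submission
  imports Defs
begin

lemma prod_bound_fin:
  fixes w :: "nat \<Rightarrow> complex"
  assumes "\<And>i. norm (w i) \<le> b i"
  shows "norm ((\<Prod>i\<le>n. 1 - w i) - 1) \<le> (\<Prod>i\<le>n. 1 + b i) - 1"
proof (induction n)
  case 0 then show ?case using assms[of 0] by simp
next
  case (Suc n)
  let ?P = "\<Prod>i\<le>n. 1 - w i" let ?Q = "\<Prod>i\<le>n. 1 + b i"
  have e: "(\<Prod>i\<le>Suc n. 1 - w i) - 1 = (?P - 1) * (1 - w (Suc n)) - w (Suc n)"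
    by (simp add: algebra_simps)
  have n1: "norm (1 - w (Suc n)) \<le> 1 + b (Suc n)"
    using assms[of "Suc n"] norm_triangle_ineq4[of 1 "w (Suc n)"] by simp
  have "norm ((\<Prod>i\<le>Suc n. 1 - w i) - 1) \<le> norm (?P - 1) * norm (1 - w (Suc n)) + norm (w (Suc n))"
    unfolding e by (metis norm_mult norm_triangle_ineq4)
  also have "\<dots> \<le> (?Q - 1) * (1 + b (Suc n)) + b (Suc n)"
  proof -
    have "0 \<le> ?Q - 1" using Suc.IH norm_ge_zero[of "?P - 1"] by linarith
    hence "norm (?P - 1) * norm (1 - w (Suc n)) \<le> (?Q - 1) * (1 + b (Suc n))"
      using Suc.IH n1 by (intro mult_mono) auto
    thus ?thesis using assms[of "Suc n"] by linarith
  qed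
  also have "\<dots> = (\<Prod>i\<le>Suc n. 1 + b i) - 1" by (simp add: algebra_simps)
  finally show ?case .
qed

lemma prodinf_bound:
  fixes w :: "nat \<Rightarrow> complex"
  assumes b: "\<And>i. norm (w i) \<le> b i" and s: "summable b"
  shows "norm (prodinf (\<lambda>i. 1 - w i) - 1) \<le> exp (suminf b) - 1"
proof -
  have b0: "\<And>i. 0 \<le> b i" by (metis b norm_ge_zero order_trans)
  have "summable (\<lambda>i. norm ((1 - w i) - 1))"
    by (rule summable_comparison_test[OF _ s]) (use b in auto)
  hence cp: "convergent_prod (\<lambda>i. 1 - w i)"
    by (intro abs_convergent_prod_imp_convergent_prod summable_imp_abs_convergent_prod)
  have L: "(\<lambda>n. norm ((\<Prod>i\<le>n. 1 - w i) - 1)) \<longlonglongrightarrow> norm (prodinf (\<lambda>i. 1 - w i) - 1)"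
    by (intro tendsto_norm tendsto_diff convergent_prod_LIMSEQ[OF cp] tendsto_const)
  show ?thesis
  proof (rule LIMSEQ_le_const2[OF L], intro exI allI impI)
    fix n
    have "norm ((\<Prod>i\<le>n. 1 - w i) - 1) \<le> (\<Prod>i\<le>n. 1 + b i) - 1" by (rule prod_bound_fin[OF b])
    also have "(\<Prod>i\<le>n. 1 + b i) \<le> (\<Prod>i\<le>n. exp (b i))"
      by (intro prod_mono) (use b0 in \<open>auto simp: add.commute exp_ge_add_one_self\<close>)
    also have "\<dots> = exp (\<Sum>i\<le>n. b i)" by (simp add: exp_sum)
    also have "(\<Sum>i\<le>n. b i) \<le> suminf b" by (rule sum_le_suminf[OF s]) (use b0 in auto)
    finally show "norm ((\<Prod>i\<le>n. 1 - w i) - 1) \<le> exp (suminf b) - 1" by simp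
  qed
qed

lemma qpoch1_bound:
  assumes "norm a \<le> r" "r < 1"
  shows "norm (qpoch1 x a - 1) \<le> exp (norm x / (1 - r)) - 1"
proof -
  have r0: "0 \<le> r" using assms(1) norm_ge_zero order_trans by blast
  have s: "summable (\<lambda>j. norm x * r ^ j)" using r0 assms by (intro summable_mult summable_geometric) auto
  have sm: "(\<Sum>j. norm x * r ^ j) = norm x / (1 - r)"
    using r0 assms by (simp add: suminf_mult suminf_geometric divide_simps)
  have "norm (x * a ^ j) \<le> norm x * r ^ j" for j
    by (simp add: norm_mult norm_power mult_left_mono power_mono assms)
  from prodinf_bound[where w = "\<lambda>j. x * a ^ j", OF this s] show ?thesis
    unfolding qpoch1_def sm .
qed

lemma exp_minus_one_le: "0 \<le> (y::real) \<Longrightarrow> exp y - 1 \<le> y * exp y"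
proof -
  assume y: "0 \<le> y"
  have "1 - y \<le> exp (-y)" using exp_ge_add_one_self[of "-y"] by simp
  hence "(1 - y) * exp y \<le> exp (-y) * exp y" by (intro mult_right_mono) auto
  thus ?thesis by (simp add: exp_minus field_simps)
qed

lemma qpoch2_bound:
  assumes "norm p \<le> 1/2" "norm a < 1"
  shows "norm (qpoch2 x p a - 1) \<le> exp (2 * (norm x / (1 - norm a)) * exp (norm x / (1 - norm a))) - 1"
proof -
  define K where "K = norm x / (1 - norm a)"
  have K0: "0 \<le> K" using assms by (simp add: K_def)
  have s: "summable (\<lambda>i. exp K * K * (1/2::real) ^ i)" by (intro summable_mult summable_geometric) auto
  have sm: "(\<Sum>i. exp K * K * (1/2::real) ^ i) = 2 * K * exp K"
    by (simp add: suminf_mult suminf_geometric)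
  have "norm (1 - qpoch1 (x * p ^ i) a) \<le> exp K * K * (1/2) ^ i" for i
  proof -
    have ph: "norm p ^ i \<le> (1/2) ^ i" by (intro power_mono assms) auto
    have ph1: "norm p ^ i \<le> 1" using assms(1) by (intro power_le_one) auto
    define y where "y = norm (x * p ^ i) / (1 - norm a)"
    have y: "y = K * norm p ^ i" by (simp add: y_def K_def norm_mult norm_power)
    have y0: "0 \<le> y" using y K0 by simp
    have "norm (1 - qpoch1 (x * p ^ i) a) = norm (qpoch1 (x * p ^ i) a - 1)" by (simp add: norm_minus_commute)
    also have "\<dots> \<le> exp y - 1" unfolding y_def by (rule qpoch1_bound) (use assms in auto)
    also have "\<dots> \<le> y * exp y" by (rule exp_minus_one_le[OF y0])
    also have "\<dots> \<le> (K * (1/2)^i) * exp K"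
      using y K0 ph ph1 by (intro mult_mono) (auto intro!: mult_left_mono mult_right_le_one_le)
    finally show ?thesis by (simp add: algebra_simps)
  qed
  from prodinf_bound[where w = "\<lambda>i. 1 - qpoch1 (x * p ^ i) a", OF this s]
  have "norm (prodinf (\<lambda>i. 1 - (1 - qpoch1 (x * p ^ i) a)) - 1) \<le> exp (2 * K * exp K) - 1"
    unfolding sm .
  thus ?thesis by (simp add: qpoch2_def K_def)
qed

lemma tend1:
  assumes "(x \<longlongrightarrow> 0) F" "eventually (\<lambda>p. norm (a p) \<le> 1/2) F"
  shows "((\<lambda>p. qpoch1 (x p) (a p)) \<longlongrightarrow> 1) F"
proof -
  have "((\<lambda>p. exp (norm (x p) / (1 - 1/2)) - 1) \<longlongrightarrow> exp (norm (0::complex) / (1 - 1/2)) - 1) F"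
    by (intro tendsto_intros assms(1)) simp
  hence g: "((\<lambda>p. exp (norm (x p) / (1 - 1/2)) - 1) \<longlongrightarrow> 0) F" by simp
  have "((\<lambda>p. qpoch1 (x p) (a p) - 1) \<longlongrightarrow> 0) F"
    by (rule Lim_null_comparison[OF _ g], rule eventually_mono[OF assms(2)], rule qpoch1_bound) auto
  then show ?thesis by (simp add: LIM_zero_iff)
qed

lemma tend2:
  assumes "(x \<longlongrightarrow> 0) F" "eventually (\<lambda>p. norm (pp p) \<le> 1/2) F" "norm a < 1"
  shows "((\<lambda>p. qpoch2 (x p) (pp p) a) \<longlongrightarrow> 1) F"
proof -
  have "((\<lambda>p. exp (2 * (norm (x p) / (1 - norm a)) * exp (norm (x p) / (1 - norm a))) - 1)
     \<longlongrightarrow> exp (2 * (norm (0::complex) / (1 - norm a)) * exp (norm (0::complex) / (1 - norm a))) - 1) F"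
    using assms(3) by (intro tendsto_intros assms(1)) auto
  hence g: "((\<lambda>p. exp (2 * (norm (x p) / (1 - norm a)) * exp (norm (x p) / (1 - norm a))) - 1) \<longlongrightarrow> 0) F" by simp
  have "((\<lambda>p. qpoch2 (x p) (pp p) a - 1) \<longlongrightarrow> 0) F"
    by (rule Lim_null_comparison[OF _ g], rule eventually_mono[OF assms(2)], rule qpoch2_bound) (auto simp: assms(3))
  then show ?thesis by (simp add: LIM_zero_iff)
qed

lemma argx:
  assumes "0 < e" "\<And>p. 0 < p \<Longrightarrow> f p = K * complex_of_real (p powr e)"
  shows "(f \<longlongrightarrow> 0) (at_right 0)"
proof -
  have "((\<lambda>p. p powr e) \<longlongrightarrow> 0) (at_right (0::real))"
    by (rule tendsto_zero_powrI[OF _ tendsto_const]) (auto intro: tendsto_ident_at eventually_at_right_less[THEN eventually_mono] simp: assms)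
  hence "((\<lambda>p. K * complex_of_real (p powr e)) \<longlongrightarrow> K * complex_of_real 0) (at_right 0)"
    by (intro tendsto_intros)
  hence "((\<lambda>p. K * complex_of_real (p powr e)) \<longlongrightarrow> 0) (at_right 0)" by simp
  moreover have "eventually (\<lambda>p. K * complex_of_real (p powr e) = f p) (at_right 0)"
    using eventually_at_right_less[of 0] by eventually_elim (simp add: assms)
  ultimately show ?thesis by (rule Lim_transform_eventually)
qed

lemma pw_add: "0 < p \<Longrightarrow> complex_of_real (p powr (a + b)) = complex_of_real (p powr a) * complex_of_real (p powr b)"
  by (simp add: powr_add)
lemma pw_diff: "0 < p \<Longrightarrow> complex_of_real (p powr (a - b)) = complex_of_real (p powr a) / complex_of_real (p powr b)"
  by (simp add: powr_diff)
lemma pw_minus: "0 < p \<Longrightarrow> complex_of_real (p powr (- a)) = 1 / complex_of_real (p powr a)"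
  by (simp add: powr_minus divide_inverse)
lemma pw_nz: "0 < p \<Longrightarrow> complex_of_real (p powr a) \<noteq> 0" by simp

lemma E1: "0 < p \<Longrightarrow> complex_of_real p * Q * (z * complex_of_real (p powr ze)) / (u * complex_of_real (p powr al))
   = (Q * z / u) * complex_of_real (p powr (1 + ze - al))"
  by (cases "u = 0") (simp_all add: pw_add pw_diff field_simps)

lemma E2: "0 < p \<Longrightarrow> z \<noteq> 0 \<Longrightarrow> Q / (u * complex_of_real (p powr al) * (z * complex_of_real (p powr ze)))
   = (Q / (u * z)) * complex_of_real (p powr (- al - ze))"
  by (cases "u = 0") (simp_all add: pw_add pw_diff pw_minus field_simps)

lemma E3: "0 < p \<Longrightarrow> Q \<noteq> 0 \<Longrightarrow> complex_of_real p * (u * complex_of_real (p powr al)) * (z * complex_of_real (p powr ze)) / Q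
   = (u * z / Q) * complex_of_real (p powr (1 + al + ze))"
  by (simp add: pw_add field_simps)

lemma E4: "0 < p \<Longrightarrow> Q \<noteq> 0 \<Longrightarrow> z \<noteq> 0 \<Longrightarrow> u * complex_of_real (p powr al) / (Q * (z * complex_of_real (p powr ze)))
   = (u / (Q * z)) * complex_of_real (p powr (al - ze))"
  by (simp add: pw_diff field_simps)

lemma argA: "0 < 1 + ze - al \<Longrightarrow> ((\<lambda>p. complex_of_real p * Q * (z * complex_of_real (p powr ze)) / (u * complex_of_real (p powr al))) \<longlongrightarrow> 0) (at_right 0)"
  by (rule argx, assumption, rule E1)
lemma argB: "0 < - al - ze \<Longrightarrow> z \<noteq> 0 \<Longrightarrow> ((\<lambda>p. Q / (u * complex_of_real (p powr al) * (z * complex_of_real (p powr ze)))) \<longlongrightarrow> 0) (at_right 0)"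
  by (rule argx, assumption, rule E2)
lemma argC: "0 < 1 + al + ze \<Longrightarrow> Q \<noteq> 0 \<Longrightarrow> ((\<lambda>p. complex_of_real p * (u * complex_of_real (p powr al)) * (z * complex_of_real (p powr ze)) / Q) \<longlongrightarrow> 0) (at_right 0)"
  by (rule argx, assumption, rule E3)
lemma argD: "0 < al - ze \<Longrightarrow> Q \<noteq> 0 \<Longrightarrow> z \<noteq> 0 \<Longrightarrow> ((\<lambda>p. u * complex_of_real (p powr al) / (Q * (z * complex_of_real (p powr ze)))) \<longlongrightarrow> 0) (at_right 0)"
  by (rule argx, assumption, rule E4)

theorem proposition4p3:
  fixes n :: nat and q u0 u1 :: complex and t :: "nat \<Rightarrow> complex"
    and \<alpha> :: "nat \<Rightarrow> real" and \<zeta> :: real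
  assumes "norm q > 1"
    and "inP \<alpha> \<zeta>"
    and "\<not> (\<exists>r<6. \<alpha> r + 1/2 = \<bar>\<zeta> + 1/2\<bar>)"
    and "\<not> (\<alpha> 4 + \<bar>\<zeta> + 1/2\<bar> \<ge> 1/2)"
  shows "\<exists>C. \<forall>z v c. z \<noteq> 0 \<longrightarrow> has_val_lc (Fsub n q t u0 u1 \<alpha> \<zeta> z) v c \<longrightarrow> c = C"
proof -
  have q0: "q \<noteq> 0" using assms(1) by auto
  have qn: "q ^ n \<noteq> 0" using q0 by simp
  have qi: "norm (1/q) < 1" using assms(1) by (simp add: norm_divide divide_less_eq)
  have lo: "\<And>i. i < 6 \<Longrightarrow> \<bar>\<zeta> + 1/2\<bar> - 1/2 \<le> \<alpha> i"
    using assms(2) unfolding inP_def by (simp add: add.commute)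
  have pos: "0 < \<alpha> i - \<zeta> \<and> 0 < 1 + \<alpha> i + \<zeta>" if "i < 6" for i
  proof -
    have "\<alpha> i + 1/2 \<noteq> \<bar>\<zeta> + 1/2\<bar>" using assms(3) that by blast
    with lo[OF that] show ?thesis by (cases "\<zeta> + 1/2 \<ge> 0") auto
  qed
  have A4: "0 < 1 + \<zeta> - \<alpha> 4" "0 < - \<alpha> 4 - \<zeta>" using assms(4) by (cases "\<zeta> + 1/2 \<ge> 0"; auto)+
  have ev: "eventually (\<lambda>p. norm (complex_of_real p) \<le> 1/2) (at_right 0)"
    by (rule eventually_at_rightI[of 0 "1/2"]) auto
  show ?thesis
  proof (intro exI[of _ 1] allI impI)
    fix z v c assume z: "z \<noteq> 0" and h: "has_val_lc (Fsub n q t u0 u1 \<alpha> \<zeta> z) v c"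
    define F where "F = Fsub n q t u0 u1 \<alpha> \<zeta> z"
    have Pr: "((\<lambda>x. \<Prod>r<4. qpoch2
                  (complex_of_real x * (t r * complex_of_real (x powr \<alpha> r)) *
                   (z * complex_of_real (x powr \<zeta>)) / q) (complex_of_real x) (1 / q) *
                 qpoch2 (t r * complex_of_real (x powr \<alpha> r) /
                   (q * (z * complex_of_real (x powr \<zeta>)))) (complex_of_real x) (1 / q))
        \<longlongrightarrow> (\<Prod>r<(4::nat). 1 * (1::complex))) (at_right 0)"
    proof (rule tendsto_prod)
      fix r assume "r \<in> {..<(4::nat)}"
      hence "r < 6" by simp
      from pos[OF this] show "((\<lambda>x. qpoch2
                  (complex_of_real x * (t r * complex_of_real (x powr \<alpha> r)) *
                   (z * complex_of_real (x powr \<zeta>)) / q) (complex_of_real x) (1 / q) *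
                 qpoch2 (t r * complex_of_real (x powr \<alpha> r) /
                   (q * (z * complex_of_real (x powr \<zeta>)))) (complex_of_real x) (1 / q))
        \<longlongrightarrow> 1 * 1) (at_right 0)"
        by (intro tendsto_mult tend2 ev qi argC argD q0 z) auto
    qed
    have "(F \<longlongrightarrow> 1 / ((\<Prod>k<n. 1 * (1::complex)) * 1 * 1 * 1 * 1 * (\<Prod>r<(4::nat). 1 * (1::complex)))) (at_right 0)"
      unfolding F_def Fsub_def Phi_def
      by (intro tendsto_divide tendsto_mult tendsto_prod tendsto_const tend1 tend2 ev qi
            argA argB argC argD A4 z q0 qn Pr) (use pos[of 4] pos[of 5] in auto)
    hence F1: "(F \<longlongrightarrow> 1) (at_right 0)" by simp
    from h have c0: "c \<noteq> 0" and G: "((\<lambda>p. F p / complex_of_real (p powr v)) \<longlongrightarrow> c) (at_right 0)"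
      unfolding has_val_lc_def F_def by auto
    have pz: "((\<lambda>p. complex_of_real (p powr e)) \<longlongrightarrow> 0) (at_right 0)" if "0 < e" for e
      by (rule argx[where K = 1, OF that]) simp
    have evp: "eventually (\<lambda>p::real. 0 < p) (at_right 0)" by (rule eventually_at_right_less)
    have nb: "at_right (0::real) \<noteq> bot" by simp
    consider "v = 0" | "v > 0" | "v < 0" by linarith
    then show "c = 1"
    proof cases
      case 1
      have "eventually (\<lambda>p. F p = F p / complex_of_real (p powr v)) (at_right 0)"
        using evp by eventually_elim (simp add: 1)
      from Lim_transform_eventually[OF F1 this] have "((\<lambda>p. F p / complex_of_real (p powr v)) \<longlongrightarrow> 1) (at_right 0)" .
      from tendsto_unique[OF nb G this] show ?thesis .
    next
      case 2
      have "((\<lambda>p. F p / complex_of_real (p powr v) * complex_of_real (p powr v)) \<longlongrightarrow> c * 0) (at_right 0)"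
        by (intro tendsto_mult G pz 2)
      moreover have "eventually (\<lambda>p. F p / complex_of_real (p powr v) * complex_of_real (p powr v) = F p) (at_right 0)"
        using evp by eventually_elim simp
      ultimately have "(F \<longlongrightarrow> 0) (at_right 0)" by (simp add: Lim_transform_eventually)
      from tendsto_unique[OF nb F1 this] show ?thesis by simp
    next
      case 3
      have "((\<lambda>p. F p * complex_of_real (p powr (- v))) \<longlongrightarrow> 1 * 0) (at_right 0)"
        using 3 by (intro tendsto_mult F1 pz) simp
      moreover have "eventually (\<lambda>p. F p * complex_of_real (p powr (- v)) = F p / complex_of_real (p powr v)) (at_right 0)"
        using evp by eventually_elim (simp add: powr_minus divide_inverse)
      ultimately have "((\<lambda>p. F p / complex_of_real (p powr v)) \<longlongrightarrow> 0) (at_right 0)"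
        by (simp add: Lim_transform_eventually)
      from tendsto_unique[OF nb G this] c0 show ?thesis by simp
    qed
  qed
qed

end
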